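(* The series $\Psi_0^+(x)=\tau([x])$ and $\Psi_0^-(x)=\tau(-[x])$ satisfy \[ \big(\beta D-S(R_+)\big)\Psi_0^+(x)=0,\qquad \big(\beta D+S(R_-)\big)\Psi_0^-(x)=0, \] where $S(R_\pm)=\sum_{k=1}^L ks_kR_\pm^k$.
   Context: Let $G(z)=1+\sum_{k=1}^Mg_kz^k$ be a polynomial, $\beta,\gamma$ formal parameters, ${\bf s}=(s_1,s_2,\dots)$ with only $s_1,\dots,s_L$ nonzero and $S(z)=\sum_{k=1}^Lks_kz^k$. For a partition $\lambda$ let $r_\lambda=\prod_{(i,j)\in\lambda}G((j-i)\beta)$ (boxes $(i,j)$, $i$ = row, $j$ = column), and $\tau({\bf t})=\sum_\lambda\gamma^{|\lambda|}r_\lambda s_\lambda({\bf t})s_\lambda(\beta^{-1}{\bf s})$, Schur functions being written in ${\bf t}=(t_1,t_2,\dots)$ with $p_i=it_i$, and $\beta^{-1}{\bf s}=(\beta^{-1}s_1,\dots)$. Here $[x]=(x,x^2/2,x^3/3,\dots)$. $D=x\,d/dx$, and $R_\pm=\gamma xG(\pm\beta D)$ acts on formal series in $x$ by $R_\pm(x^j)=\gamma G(\pm\beta j)x^{j+1}$. *)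

theory Defs
  imports "HOL-Computational_Algebra.Computational_Algebra" "HOL-Combinatorics.Permutations"
begin

definition partitions_of :: "nat \<Rightarrow> nat list set" where
  "partitions_of n = {lam. sorted_wrt (\<ge>) lam \<and> 0 \<notin> set lam \<and> sum_list lam = n}"

text \<open>Complete homogeneous functions h_n(t), defined by
  exp(sum_k t_k z^k) = sum_n h_n(t) z^n, i.e. h_n is the coefficient of z^n of
  prod_k exp(t_k z^k): the sum over multiplicity vectors m with sum_k k m_k = n of
  prod_k t_k^(m_k)/m_k!.\<close>
definition hcomp :: "(nat \<Rightarrow> 'r::{comm_ring_1,inverse}) \<Rightarrow> nat \<Rightarrow> 'r" where
  "hcomp t n =
     (\<Sum>m\<in>{m::nat\<Rightarrow>nat. (\<forall>k. (k = 0 \<or> k > n) \<longrightarrow> m k = 0) \<and> (\<Sum>k=1..n. k * m k) = n}.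
        \<Prod>k=1..n. t k ^ m k * inverse (of_nat (fact (m k))))"

definition hcomp_int :: "(nat \<Rightarrow> 'r::{comm_ring_1,inverse}) \<Rightarrow> int \<Rightarrow> 'r" where
  "hcomp_int t k = (if k < 0 then 0 else hcomp t (nat k))"

text \<open>Jacobi--Trudi: s_lambda(t) = det (h_{lambda_i - i + j}(t))_{i,j}, written via
  the Leibniz expansion (indices shifted to start at 0).\<close>
definition schur :: "(nat \<Rightarrow> 'r::{comm_ring_1,inverse}) \<Rightarrow> nat list \<Rightarrow> 'r" where
  "schur t lam =
     (\<Sum>p\<in>{p. p permutes {0..<length lam}}.
        of_int (sign p) *
        (\<Prod>i<length lam. hcomp_int t (int (lam ! i) - int i + int (p i))))"

definition r_lambda :: "'a::field poly \<Rightarrow> 'a \<Rightarrow> nat list \<Rightarrow> 'a" where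
  "r_lambda G \<beta> lam =
     (\<Prod>i\<in>{1..length lam}. \<Prod>j\<in>{1..lam ! (i - 1)}.
        poly G ((of_int (int j - int i)) * \<beta>))"

text \<open>tau(t) = sum_lambda gamma^|lambda| r_lambda s_lambda(t) s_lambda(beta^{-1} s),
  evaluated at a sequence t of formal power series in x, the sum being taken
  (as a limit in the x-adic topology of formal power series) degree by degree
  in |lambda|.\<close>
definition tau ::
  "'a::field poly \<Rightarrow> 'a \<Rightarrow> 'a \<Rightarrow> (nat \<Rightarrow> 'a) \<Rightarrow> (nat \<Rightarrow> 'a fps) \<Rightarrow> 'a fps" where
  "tau G \<beta> \<gamma> s t =
     (\<Sum>n. \<Sum>lam\<in>partitions_of n.
        fps_const (\<gamma> ^ n * r_lambda G \<beta> lam * schur (\<lambda>k. s k / \<beta>) lam) * schur t lam)"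

text \<open>The Miwa shift [x] = (x, x^2/2, x^3/3, ...), as a sequence indexed from 1.\<close>
definition miwa :: "nat \<Rightarrow> 'a::field fps" where
  "miwa k = fps_const (inverse (of_nat k)) * fps_X ^ k"

definition Dop :: "'a::field fps \<Rightarrow> 'a fps" where
  "Dop f = fps_X * fps_deriv f"

text \<open>R = gamma x G(sigma beta D) with sigma = +1 or -1, i.e. R(x^j) = gamma G(sigma beta j) x^(j+1).\<close>
definition Rop :: "'a::field poly \<Rightarrow> 'a \<Rightarrow> 'a \<Rightarrow> 'a \<Rightarrow> 'a fps \<Rightarrow> 'a fps" where
  "Rop G \<beta> \<gamma> \<sigma> f =
     Abs_fps (\<lambda>n. if n = 0 then 0 else \<gamma> * poly G (\<sigma> * \<beta> * of_nat (n - 1)) * fps_nth f (n - 1))"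

definition S_op :: "nat \<Rightarrow> (nat \<Rightarrow> 'a::field) \<Rightarrow> ('a fps \<Rightarrow> 'a fps) \<Rightarrow> 'a fps \<Rightarrow> 'a fps" where
  "S_op L s R f = (\<Sum>k=1..L. fps_const (of_nat k * s k) * (R ^^ k) f)"

end

theory Submission
  imports Defs "Jordan_Normal_Form.Determinant"
begin


lemma suminf_fps_X_pow:
  fixes c :: "nat \<Rightarrow> 'a::field"
  shows "(\<Sum>n. fps_const (c n) * fps_X ^ n) = Abs_fps c"
proof -
  have "(\<lambda>n. \<Sum>i = 0..n. fps_const (Abs_fps c $ i) * fps_X ^ i) \<longlonglongrightarrow> Abs_fps c"
    by (rule fps_notation)
  hence "(\<lambda>n. \<Sum>i < Suc n. fps_const (c i) * fps_X ^ i) \<longlonglongrightarrow> Abs_fps c"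
    by (simp add: atLeast0AtMost lessThan_Suc_atMost)
  hence "(\<lambda>n. fps_const (c n) * fps_X ^ n) sums Abs_fps c"
    unfolding sums_def by (rule LIMSEQ_imp_Suc)
  thus ?thesis by (rule sums_unique[symmetric])
qed

definition hMset :: "nat \<Rightarrow> (nat \<Rightarrow> nat) set" where
  "hMset n = {m::nat\<Rightarrow>nat. (\<forall>k. (k = 0 \<or> k > n) \<longrightarrow> m k = 0) \<and> (\<Sum>k=1..n. k * m k) = n}"

definition hterm :: "(nat \<Rightarrow> 'r::{comm_ring_1,inverse}) \<Rightarrow> nat \<Rightarrow> (nat \<Rightarrow> nat) \<Rightarrow> 'r" where
  "hterm t N m = (\<Prod>k=1..N. t k ^ m k * inverse (of_nat (fact (m k))))"

lemma hcomp_alt: "hcomp t n = sum (hterm t n) (hMset n)"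
  unfolding hcomp_def hterm_def hMset_def by simp

lemma hMset_le: assumes "m \<in> hMset n" "j \<in> {1..n}" shows "j * m j \<le> n"
proof -
  have "j * m j \<le> (\<Sum>k=1..n. k * m k)"
    by (rule member_le_sum[where f="\<lambda>k. k * m k"]) (use assms in auto)
  thus ?thesis using assms unfolding hMset_def by simp
qed

lemma hMset_le2: assumes "m \<in> hMset n" "j \<in> {1..n}" "k \<in> {1..n}" "j \<noteq> k"
  shows "j * m j + k * m k \<le> n"
proof -
  have "(\<Sum>i\<in>{j,k}. i * m i) \<le> (\<Sum>k=1..n. k * m k)"
    by (rule sum_mono2) (use assms in auto)
  thus ?thesis using assms unfolding hMset_def by simp
qed

lemma finite_Mset: "finite (hMset n)"
proof (rule finite_subset)
  show "hMset n \<subseteq> {f. \<forall>x. (x \<in> {1..n} \<longrightarrow> f x \<in> {0..n}) \<and> (x \<notin> {1..n} \<longrightarrow> f x = 0)}"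
  proof (safe)
    fix m x assume m: "m \<in> hMset n"
    { assume x: "x \<in> {1..n}"
      have 1: "x * m x \<le> n" by (rule hMset_le[OF m x])
      have 2: "m x \<le> x * m x" using x by simp
      show "m x \<in> {0..n}" using le_trans[OF 2 1] by simp }
    { assume "x \<notin> {1..n}" hence h: "x = 0 \<or> x > n" by auto
      have "\<forall>k. (k = 0 \<or> k > n) \<longrightarrow> m k = 0" using m unfolding hMset_def by simp
      thus "m x = 0" using h by (cases "x = 0") auto }
  qed
  show "finite {f. \<forall>x. (x \<in> {1..n} \<longrightarrow> f x \<in> {0..n}) \<and> (x \<notin> {1..n} \<longrightarrow> f (x::nat) = (0::nat))}"
    by (rule finite_set_of_finite_funs) auto
qed



lemma hterm_extend:
  assumes z: "\<forall>k>n. m k = 0" and nN: "n \<le> N" and inv1: "inverse (1::'r::{comm_ring_1,inverse}) = 1"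
  shows "hterm (t::nat\<Rightarrow>'r) N m = hterm t n m"
  unfolding hterm_def
proof (rule prod.mono_neutral_right)
  show "finite {1..N}" by simp
  show "{1..n} \<subseteq> {1..N}" using nN by auto
  show "\<forall>i\<in>{1..N} - {1..n}. t i ^ m i * inverse (of_nat (fact (m i))) = 1"
    using z inv1 by auto
qed

lemma fact_inv_step:
  assumes inv: "\<And>m. of_nat (fact m) * inverse (of_nat (fact m) :: 'r) = 1"
  shows "of_nat (Suc a) * inverse (of_nat (fact (Suc a)) :: 'r::{comm_ring_1,inverse})
         = inverse (of_nat (fact a))"
proof -
  have "of_nat (Suc a) * inverse (of_nat (fact (Suc a)) :: 'r)
      = of_nat (Suc a) * inverse (of_nat (fact (Suc a)) :: 'r) * (of_nat (fact a) * inverse (of_nat (fact a)))"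
    using inv by simp
  also have "\<dots> = (of_nat (fact (Suc a)) * inverse (of_nat (fact (Suc a)) :: 'r)) * inverse (of_nat (fact a))"
    by (simp add: fact_Suc algebra_simps)
  also have "\<dots> = inverse (of_nat (fact a))" by (simp only: inv mult_1_left)
  finally show ?thesis .
qed

lemma sum_upd:
  assumes "finite A" "k \<in> A"
  shows "(\<Sum>j\<in>A. j * (m(k:=v)) j) + k * m k = (\<Sum>j\<in>A. j * m j) + k * (v::nat)"
proof -
  have e: "(\<Sum>j\<in>A - {k}. j * (m(k:=v)) j) = (\<Sum>j\<in>A - {k}. j * m j)"
    by (rule sum.cong) auto
  show ?thesis
    using assms by (simp add: sum.remove[OF assms] e)
qed

lemma hcomp_rec:
  fixes t :: "nat \<Rightarrow> 'r::{comm_ring_1,inverse}"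
  assumes inv: "\<And>m. of_nat (fact m) * inverse (of_nat (fact m) :: 'r) = 1"
  shows "of_nat n * hcomp t n = (\<Sum>k=1..n. of_nat k * t k * hcomp t (n-k))"
proof -
  have inv1: "inverse (1::'r) = 1" using inv[of 0] by simp
  have 1: "of_nat n * hcomp t n = (\<Sum>m\<in>hMset n. \<Sum>k=1..n. of_nat (k * m k) * hterm t n m)"
    unfolding hcomp_alt sum_distrib_left
  proof (rule sum.cong[OF refl])
    fix m assume "m \<in> hMset n"
    hence "n = (\<Sum>k=1..n. k * m k)" unfolding hMset_def by simp
    hence "(of_nat n :: 'r) = (\<Sum>k=1..n. of_nat (k * m k))" by (metis of_nat_sum)
    thus "of_nat n * hterm t n m = (\<Sum>k=1..n. of_nat (k * m k) * hterm t n m)"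
      by (simp add: sum_distrib_right)
  qed
  also have "\<dots> = (\<Sum>k=1..n. \<Sum>m\<in>hMset n. of_nat (k * m k) * hterm t n m)"
    by (rule sum.swap)
  also have "\<dots> = (\<Sum>k=1..n. of_nat k * t k * hcomp t (n-k))"
  proof (rule sum.cong[OF refl])
    fix k assume k: "k \<in> {1..n}"
    define g where "g = (\<lambda>m'::nat\<Rightarrow>nat. m'(k := Suc (m' k)))"
    define h where "h = (\<lambda>m::nat\<Rightarrow>nat. m(k := m k - 1))"
    let ?f = "\<lambda>m. (of_nat (k * m k) :: 'r) * hterm t n m"
    have "(\<Sum>m\<in>hMset n. ?f m) = (\<Sum>m\<in>{m\<in>hMset n. m k \<noteq> 0}. ?f m)"
      by (rule sum.mono_neutral_right) (auto simp: finite_Mset)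
    also have "\<dots> = (\<Sum>m'\<in>hMset (n-k). ?f (g m'))"
    proof (rule sum.reindex_bij_witness[where i=g and j=h])
      fix m assume m: "m \<in> {m\<in>hMset n. m k \<noteq> 0}"
      show "g (h m) = m" using m by (auto simp: g_def h_def)
      show "h m \<in> hMset (n-k)"
      proof -
        have mM: "m \<in> hMset n" and mk: "m k \<noteq> 0" using m by auto
        have z: "\<forall>j. (j = 0 \<or> j > n) \<longrightarrow> m j = 0" and s: "(\<Sum>j=1..n. j * m j) = n"
          using mM unfolding hMset_def by auto
        have kle: "k * m k \<le> n" by (rule hMset_le[OF mM k])
        have z2: "(h m) j = 0" if j: "j = 0 \<or> j > n - k" for j
        proof (cases "j = k")
          case True
          have kk: "k > n - k" "k \<ge> 1" "k \<le> n" using j True k by auto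
          have "k * m k < k * 2" using kle kk by linarith
          hence "m k < 2" by simp
          thus ?thesis using True mk by (simp add: h_def)
        next
          case False
          show ?thesis
          proof (cases "j = 0 \<or> j > n")
            case True
            hence "m j = 0" using z by (cases "j = 0") auto
            thus ?thesis using False by (simp add: h_def)
          next
            case F2: False
            hence jn: "j \<in> {1..n}" and jgt: "j > n - k" using j by auto
            have "j * m j + k * m k \<le> n" by (rule hMset_le2[OF mM jn k False])
            moreover have "k \<le> k * m k" using mk by simp
            ultimately have "j * m j < j" using jgt by linarith
            hence "m j = 0" by (cases "m j") auto
            thus ?thesis using False by (simp add: h_def)
          qed
        qed
        have "(\<Sum>j=1..n. j * (h m) j) + k * m k = n + k * (m k - 1)"
          unfolding h_def using sum_upd[of "{1..n}" k m "m k - 1"] k s by simp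
        hence "(\<Sum>j=1..n. j * (h m) j) = n - k"
          using mk kle by (cases "m k") (auto simp: algebra_simps)
        moreover have "(\<Sum>j=1..n. j * (h m) j) = (\<Sum>j=1..n-k. j * (h m) j)"
          by (rule sum.mono_neutral_right) (use z2 in auto)
        ultimately have "(\<Sum>j=1..n-k. j * (h m) j) = n - k" by simp
        thus ?thesis unfolding hMset_def using z2 by auto
      qed
    next
      fix m' assume m': "m' \<in> hMset (n-k)"
      have z: "\<forall>j. (j = 0 \<or> j > n - k) \<longrightarrow> m' j = 0" and s: "(\<Sum>j=1..n-k. j * m' j) = n - k"
        using m' unfolding hMset_def by auto
      show "h (g m') = m'" by (auto simp: g_def h_def)
      have s2: "(\<Sum>j=1..n. j * m' j) = (\<Sum>j=1..n-k. j * m' j)"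
        by (rule sum.mono_neutral_right) (use z in auto)
      have "(\<Sum>j=1..n. j * (g m') j) + k * m' k = (\<Sum>j=1..n. j * m' j) + k * Suc (m' k)"
        unfolding g_def by (rule sum_upd) (use k in auto)
      hence "(\<Sum>j=1..n. j * (g m') j) = n"
        using s s2 k by auto
      moreover have "\<forall>j. (j = 0 \<or> j > n) \<longrightarrow> (g m') j = 0"
        using z k by (auto simp: g_def)
      ultimately show "g m' \<in> {m\<in>hMset n. m k \<noteq> 0}" unfolding hMset_def by (auto simp: g_def)
    next
      fix m assume "m \<in> {m\<in>hMset n. m k \<noteq> 0}"
      show "?f (g (h m)) = ?f m" using \<open>m \<in> _\<close> by (auto simp: g_def h_def)
    qed
    also have "\<dots> = (\<Sum>m'\<in>hMset (n-k). of_nat k * t k * hterm t (n-k) m')"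
    proof (rule sum.cong[OF refl])
      fix m' assume m': "m' \<in> hMset (n-k)"
      have z: "\<forall>j>n-k. m' j = 0" using m' unfolding hMset_def by auto
      let ?F = "\<lambda>j a. t j ^ a * inverse (of_nat (fact a) :: 'r)"
      have kin: "k \<in> {1..n}" using k .
      have e1: "hterm t n (g m') = ?F k (Suc (m' k)) * (\<Prod>j\<in>{1..n}-{k}. ?F j (m' j))"
      proof -
        have "hterm t n (g m') = ?F k (Suc (m' k)) * (\<Prod>j\<in>{1..n}-{k}. ?F j ((g m') j))"
          unfolding hterm_def by (subst prod.remove[OF _ kin]) (auto simp: g_def)
        also have "(\<Prod>j\<in>{1..n}-{k}. ?F j ((g m') j)) = (\<Prod>j\<in>{1..n}-{k}. ?F j (m' j))"
          by (rule prod.cong) (auto simp: g_def)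
        finally show ?thesis .
      qed
      have e2: "hterm t n m' = ?F k (m' k) * (\<Prod>j\<in>{1..n}-{k}. ?F j (m' j))"
        unfolding hterm_def by (subst prod.remove[OF _ kin]) auto
      have e3: "of_nat (Suc (m' k)) * ?F k (Suc (m' k)) = t k * ?F k (m' k)"
      proof -
        have "of_nat (Suc (m' k)) * ?F k (Suc (m' k))
            = t k * t k ^ m' k * (of_nat (Suc (m' k)) * inverse (of_nat (fact (Suc (m' k))) :: 'r))"
          by (simp only: power_Suc mult_ac)
        also have "\<dots> = t k * ?F k (m' k)"
          by (simp only: fact_inv_step[OF inv] mult_ac)
        finally show ?thesis .
      qed
      have "?f (g m') = of_nat k * (of_nat (Suc (m' k)) * ?F k (Suc (m' k))) * (\<Prod>j\<in>{1..n}-{k}. ?F j (m' j))"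
        unfolding e1 by (simp add: g_def algebra_simps)
      also have "\<dots> = of_nat k * t k * hterm t n m'"
        unfolding e3 e2 by (simp add: algebra_simps)
      also have "hterm t n m' = hterm t (n-k) m'"
        by (rule hterm_extend[OF z _ inv1]) simp
      finally show "?f (g m') = of_nat k * t k * hterm t (n-k) m'" .
    qed
    also have "\<dots> = of_nat k * t k * hcomp t (n-k)"
      unfolding hcomp_alt by (simp add: sum_distrib_left)
    finally show "(\<Sum>m\<in>hMset n. ?f m) = of_nat k * t k * hcomp t (n-k)" .
  qed
  finally show ?thesis .
qed



lemma inv_fact_fps:
  "of_nat (fact m) * inverse (of_nat (fact m) :: 'a::field_char_0 fps) = 1"
proof -
  have "inverse (of_nat (fact m) :: 'a fps) = fps_const (inverse (of_nat (fact m)))"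
    by (metis fps_of_nat fps_const_inverse)
  thus ?thesis by (simp flip: fps_of_nat add: fps_const_mult[symmetric])
qed

lemma inv_fact_field:
  "of_nat (fact m) * inverse (of_nat (fact m) :: 'a::field_char_0) = 1"
  by simp

lemma hMset_0: "hMset 0 = {\<lambda>_. 0}"
  unfolding hMset_def by (auto simp: fun_eq_iff)

lemma hcomp_0: "hcomp t 0 = 1"
  unfolding hcomp_alt hMset_0 hterm_def by simp

lemma of_nat_cancel_fps:
  fixes a b :: "'a::field_char_0 fps"
  assumes "n > 0" "of_nat n * a = of_nat n * b"
  shows "a = b"
proof -
  have "(of_nat n :: 'a fps) $ 0 \<noteq> 0" using assms(1)
    by (simp flip: fps_of_nat)
  hence "(of_nat n :: 'a fps) \<noteq> 0" by auto
  thus ?thesis using assms(2) by simp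
qed

lemma miwa_mult: "k > 0 \<Longrightarrow> of_nat k * (miwa k :: 'a::field_char_0 fps) = fps_X ^ k"
  unfolding miwa_def
  by (simp flip: fps_of_nat add: mult.assoc[symmetric] fps_const_mult[symmetric])

lemma hcomp_miwa: "hcomp (miwa :: nat \<Rightarrow> 'a::field_char_0 fps) n = fps_X ^ n"
proof (induction n rule: less_induct)
  case (less n)
  show ?case
  proof (cases "n = 0")
    case True thus ?thesis by (simp add: hcomp_0)
  next
    case False
    have "of_nat n * hcomp (miwa :: nat \<Rightarrow> 'a fps) n
        = (\<Sum>k=1..n. of_nat k * miwa k * hcomp miwa (n-k))"
      by (rule hcomp_rec[OF inv_fact_fps])
    also have "\<dots> = (\<Sum>k=1..n. (fps_X::'a fps) ^ n)"
    proof (rule sum.cong[OF refl])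
      fix k assume k: "k \<in> {1..n}"
      have "of_nat k * miwa k * hcomp miwa (n-k) = (fps_X::'a fps) ^ k * fps_X ^ (n-k)"
        using less.IH[of "n-k"] k miwa_mult[of k] by auto
      also have "\<dots> = fps_X ^ n" using k by (simp flip: power_add)
      finally show "of_nat k * miwa k * hcomp miwa (n-k) = (fps_X::'a fps) ^ n" .
    qed
    also have "\<dots> = of_nat n * fps_X ^ n" by simp
    finally show ?thesis using False of_nat_cancel_fps by blast
  qed
qed

lemma neg_miwa_mult:
  assumes "k > 0" shows "of_nat k * (- (miwa k :: 'a::field_char_0 fps)) = - (fps_X ^ k)"
  using miwa_mult[OF assms] by simp

lemma hcomp_neg_miwa:
  "hcomp (\<lambda>k. - miwa k :: 'a::field_char_0 fps) n =
     (if n = 0 then 1 else if n = 1 then - fps_X else 0)"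
proof (induction n rule: less_induct)
  case (less n)
  let ?t = "\<lambda>k. - miwa k :: 'a fps"
  show ?case
  proof (cases "n = 0")
    case True thus ?thesis by (simp add: hcomp_0)
  next
    case False
    have "of_nat n * hcomp ?t n = (\<Sum>k=1..n. of_nat k * ?t k * hcomp ?t (n-k))"
      by (rule hcomp_rec[OF inv_fact_fps])
    also have "\<dots> = (\<Sum>k=1..n. - (fps_X ^ k) * (if n - k = 0 then 1 else if n - k = 1 then - fps_X else 0))"
    proof (rule sum.cong[OF refl])
      fix k assume k: "k \<in> {1..n}"
      show "of_nat k * ?t k * hcomp ?t (n-k) = - (fps_X ^ k) * (if n - k = 0 then 1 else if n - k = 1 then - fps_X else 0)"
        using less.IH[of "n-k"] k neg_miwa_mult[of k, where 'a='a] by auto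
    qed
    also have "\<dots> = of_nat n * (if n = 1 then - fps_X else 0)"
    proof (cases "n = 1")
      case True thus ?thesis by simp
    next
      case n1: False
      hence n2: "n \<ge> 2" using False by simp
      let ?g = "\<lambda>k. - ((fps_X::'a fps) ^ k) * (if n - k = 0 then 1 else if n - k = 1 then - fps_X else 0)"
      have "(\<Sum>k=1..n. ?g k) = (\<Sum>k\<in>{n-1, n}. ?g k)"
        by (rule sum.mono_neutral_right) (use n2 in auto)
      also have "\<dots> = ?g (n-1) + ?g n" using n2 by simp
      also have "\<dots> = 0"
      proof -
        have "?g (n-1) = fps_X ^ (n - 1) * fps_X" using n2 by simp
        also have "\<dots> = fps_X ^ n" using n2 by (metis power_Suc2 Suc_diff_1 not_gr0 False)
        finally show ?thesis using n2 by simp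
      qed
      finally show ?thesis using n1 by simp
    qed
    finally show ?thesis using False of_nat_cancel_fps by auto
  qed
qed



definition JTmat :: "(nat \<Rightarrow> 'r::{comm_ring_1,inverse}) \<Rightarrow> nat list \<Rightarrow> 'r mat" where
  "JTmat t lam = mat (length lam) (length lam) (\<lambda>(i,j). hcomp_int t (int (lam!i) - int i + int j))"

lemma JTmat_carrier: "JTmat t lam \<in> carrier_mat (length lam) (length lam)"
  unfolding JTmat_def by simp

lemma schur_det: "schur t lam = det (JTmat t lam)"
proof -
  have "det (JTmat t lam) = (\<Sum>p\<in>{p. p permutes {0..<length lam}}.
      signof p * (\<Prod>i=0..<length lam. JTmat t lam $$ (i, p i)))"
    by (rule det_def'[OF JTmat_carrier])
  also have "\<dots> = schur t lam"
    unfolding schur_def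
  proof (rule sum.cong[OF refl])
    fix p assume "p \<in> {p. p permutes {0..<length lam}}"
    hence p: "p permutes {0..<length lam}" by simp
    have "(\<Prod>i=0..<length lam. JTmat t lam $$ (i, p i)) =
          (\<Prod>i<length lam. hcomp_int t (int (lam ! i) - int i + int (p i)))"
      unfolding atLeast0LessThan
    proof (rule prod.cong[OF refl])
      fix i assume "i \<in> {..<length lam}"
      hence "i < length lam" "p i < length lam" using permutes_in_image[OF p] by auto
      thus "JTmat t lam $$ (i, p i) = hcomp_int t (int (lam ! i) - int i + int (p i))"
        unfolding JTmat_def by simp
    qed
    thus "signof p * (\<Prod>i=0..<length lam. JTmat t lam $$ (i, p i)) =
       of_int (sign p) * (\<Prod>i<length lam. hcomp_int t (int (lam ! i) - int i + int (p i)))"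
      by simp
  qed
  finally show ?thesis by simp
qed

lemma schur_single: "schur t [n] = hcomp t n"
  unfolding schur_det JTmat_def
  by (subst det_single[of _ ]) (auto simp: hcomp_int_def)

lemma schur_nil: "schur t [] = 1"
  unfolding schur_det JTmat_def by simp

lemma hcomp_int_miwa: "k \<ge> 0 \<Longrightarrow> hcomp_int (miwa :: nat \<Rightarrow> 'a::field_char_0 fps) k = fps_X ^ nat k"
  unfolding hcomp_int_def by (simp add: hcomp_miwa)

lemma schur_miwa_zero:
  assumes len: "length lam \<ge> 2" and l1: "lam!1 \<ge> 1" and l01: "lam!1 \<le> lam!0"
  shows "schur (miwa :: nat \<Rightarrow> 'a::field_char_0 fps) lam = 0"
proof -
  let ?n = "length lam"
  let ?A = "JTmat (miwa :: nat \<Rightarrow> 'a fps) lam"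
  define d where "d = lam!0 + 1 - lam!1"
  let ?B = "multrow 1 ((fps_X::'a fps) ^ d) ?A"
  have A: "?A \<in> carrier_mat ?n ?n" by (rule JTmat_carrier)
  have l0: "0 < ?n" "Suc 0 < ?n" using len by auto
  have B: "?B \<in> carrier_mat ?n ?n" using A by (simp add: mat_multrow_def)
  have "row ?B 1 = row ?B 0"
  proof (rule eq_vecI)
    fix j assume "j < dim_vec (row ?B 0)"
    hence j: "j < ?n" by (simp add: mat_multrow_def JTmat_def)
    have "?B $$ (1, j) = fps_X ^ d * fps_X ^ nat (int (lam!1) - 1 + int j)"
    proof -
      have "lam ! Suc 0 \<ge> 1" using l1 by simp
      hence "int (lam!1) - 1 + int j \<ge> 0" by simp
      thus ?thesis using j len by (simp add: mat_multrow_def JTmat_def hcomp_int_miwa)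
    qed
    also have "\<dots> = fps_X ^ (lam!0 + j)"
      unfolding power_add[symmetric] using l1 l01 by (simp add: d_def nat_int_add)
    also have "\<dots> = ?B $$ (0, j)"
      using j l0 by (simp add: mat_multrow_def JTmat_def hcomp_int_miwa)
    finally show "row ?B 1 $ j = row ?B 0 $ j" using j l0 by (simp add: mat_multrow_def JTmat_def)
  qed (simp add: mat_multrow_def)
  hence "det ?B = 0" by (intro det_identical_rows[OF B, of 1 0]) (use len in auto)
  moreover have "det ?B = fps_X ^ d * det ?A" by (rule det_multrow[OF _ A]) (use len in auto)
  ultimately have "det ?A = 0" by simp
  thus ?thesis by (simp add: schur_det)
qed



lemma hcomp_int_neg_miwa:
  "hcomp_int (\<lambda>k. - miwa k :: 'a::field_char_0 fps) k =
     (if k = 0 then 1 else if k = 1 then - fps_X else 0)"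
  unfolding hcomp_int_def hcomp_neg_miwa by (auto simp: nat_eq_iff)

lemma schur_negmiwa_big:
  assumes "lam \<noteq> []" "lam!0 \<ge> 2"
  shows "schur (\<lambda>k. - miwa k :: 'a::field_char_0 fps) lam = 0"
  unfolding schur_def
proof (rule sum.neutral, rule ballI)
  fix p assume "p \<in> {p. p permutes {0..<length lam}}"
  have "(\<Prod>i<length lam. hcomp_int (\<lambda>k. - miwa k :: 'a fps) (int (lam ! i) - int i + int (p i))) = 0"
  proof (rule prod_zero)
    show "finite {..<length lam}" by simp
    show "\<exists>i\<in>{..<length lam}. hcomp_int (\<lambda>k. - miwa k :: 'a fps) (int (lam ! i) - int i + int (p i)) = 0"
      using assms by (intro bexI[of _ 0]) (auto simp: hcomp_int_neg_miwa)
  qed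
  thus "of_int (sign p) * (\<Prod>i<length lam. hcomp_int (\<lambda>k. - miwa k :: 'a fps) (int (lam ! i) - int i + int (p i))) = 0"
    by simp
qed

lemma schur_negmiwa_col:
  "schur (\<lambda>k. - miwa k :: 'a::field_char_0 fps) (replicate n 1) = (- fps_X) ^ n"
proof -
  let ?A = "JTmat (\<lambda>k. - miwa k :: 'a fps) (replicate n 1)"
  have A: "?A \<in> carrier_mat n n" using JTmat_carrier[of _ "replicate n 1"] by simp
  have "det ?A = prod_list (diag_mat ?A)"
    by (rule det_lower_triangular[OF _ A]) (auto simp: JTmat_def hcomp_int_neg_miwa)
  also have "diag_mat ?A = map (\<lambda>i. - fps_X) [0..<n]"
    unfolding diag_mat_def by (auto simp: JTmat_def hcomp_int_neg_miwa)
  also have "prod_list \<dots> = (- fps_X) ^ n"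
    by (simp add: map_replicate_const prod_list_replicate)
  finally show ?thesis by (simp add: schur_det)
qed

lemma E_expand:
  fixes u :: "nat \<Rightarrow> 'a::field_char_0"
  assumes n: "n \<ge> 1"
  shows "schur u (replicate n 1) =
     (\<Sum>j<n. hcomp u (Suc j) * (-1)^j * schur u (replicate (n - 1 - j) 1))"
proof -
  let ?A = "JTmat u (replicate n 1)"
  have A: "?A \<in> carrier_mat n n" using JTmat_carrier[of _ "replicate n 1"] by simp
  have "det ?A = (\<Sum>j<n. ?A $$ (0,j) * cofactor ?A 0 j)"
    by (rule laplace_expansion_row[OF A]) (use n in simp)
  also have "\<dots> = (\<Sum>j<n. hcomp u (Suc j) * (-1)^j * schur u (replicate (n - 1 - j) 1))"
  proof (rule sum.cong[OF refl])
    fix j assume "j \<in> {..<n}"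
    hence j: "j < n" by simp
    define m where "m = n - 1 - j"
    let ?M = "mat_delete ?A 0 j"
    let ?U = "mat j j (\<lambda>(a,b). hcomp_int u (int b - int a))"
    let ?C = "mat j m (\<lambda>(a,b). ?M $$ (a, b + j))"
    let ?D = "JTmat u (replicate m 1)"
    have Dc: "?D \<in> carrier_mat m m" using JTmat_carrier[of _ "replicate m 1"] by simp
    have Meq: "?M = four_block_mat ?U ?C (0\<^sub>m m j) ?D"
    proof (rule eq_matI)
      show "dim_row ?M = dim_row (four_block_mat ?U ?C (0\<^sub>m m j) ?D)"
        using A j by (simp add: m_def JTmat_def)
      show "dim_col ?M = dim_col (four_block_mat ?U ?C (0\<^sub>m m j) ?D)"
        using A j by (simp add: m_def JTmat_def)
      fix a b assume a: "a < dim_row (four_block_mat ?U ?C (0\<^sub>m m j) ?D)"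
        and b: "b < dim_col (four_block_mat ?U ?C (0\<^sub>m m j) ?D)"
      hence a': "a < j + m" and b': "b < j + m" by (auto simp: JTmat_def)
      have Mab: "?M $$ (a,b) = hcomp_int u (1 - int (Suc a) + int (if b < j then b else Suc b))"
        using a' b' j unfolding mat_delete_def JTmat_def m_def by auto
      have F: "four_block_mat ?U ?C (0\<^sub>m m j) ?D $$ (a,b) =
         (if a < j then if b < j then ?U $$ (a,b) else ?C $$ (a, b - j)
          else if b < j then 0\<^sub>m m j $$ (a - j, b) else ?D $$ (a - j, b - j))"
      proof -
        have d1: "dim_row ?U = j" "dim_col ?U = j" "dim_row ?D = m" "dim_col ?D = m"
          using Dc by auto
        show ?thesis
          using index_mat_four_block(1)[where A="?U" and B="?C" and C="0\<^sub>m m j" and D="?D" and i=a and j=b]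
          unfolding d1 using a' b' by simp
      qed
      show "?M $$ (a,b) = four_block_mat ?U ?C (0\<^sub>m m j) ?D $$ (a,b)"
      proof (cases "a < j")
        case True
        thus ?thesis
        proof (cases "b < j")
          case True
          have "1 - int (Suc a) + int b = int b - int a" by simp
          thus ?thesis unfolding F Mab using \<open>a < j\<close> True by simp
        next
          case False
          thus ?thesis unfolding F using \<open>a < j\<close> b' by simp
        qed
      next
        case aj: False
        show ?thesis
        proof (cases "b < j")
          case True
          have "1 - int (Suc a) + int b < 0" using aj True by simp
          thus ?thesis unfolding F Mab using aj True a' by (simp add: hcomp_int_def)
        next
          case False
          have e: "1 - int (Suc a) + int (Suc b) = int 1 - int (a - j) + int (b - j)" using aj False by simp
          have "?D $$ (a - j, b - j) = hcomp_int u (int 1 - int (a - j) + int (b - j))"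
            using a' b' aj False by (simp add: JTmat_def m_def)
          thus ?thesis unfolding F Mab e using aj False by (simp add: add_diff_eq)
        qed
      qed
    qed
    have "det ?M = det ?U * det ?D"
    proof -
      have Uc: "?U \<in> carrier_mat j j" by simp
      have Cc: "?C \<in> carrier_mat j m" by simp
      show ?thesis by (subst Meq) (rule det_four_block_mat_lower_left_zero[OF Uc Cc refl Dc])
    qed
    also have "det ?U = 1"
    proof -
      have "det ?U = prod_list (diag_mat ?U)"
        by (rule det_upper_triangular) (auto simp: upper_triangular_def hcomp_int_def)
      also have "diag_mat ?U = map (\<lambda>i. 1) [0..<j]"
        unfolding diag_mat_def by (auto simp: hcomp_int_def hcomp_0)
      finally show ?thesis by (simp add: map_replicate_const)
    qed
    finally have dM: "det ?M = schur u (replicate m 1)" by (simp add: schur_det)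
    have "?A $$ (0,j) = hcomp u (Suc j)"
    proof -
      have e: "nat (1 + int j) = Suc j" by (metis nat_int of_nat_Suc)
      show ?thesis using j by (simp add: JTmat_def hcomp_int_def e)
    qed
    thus "?A $$ (0,j) * cofactor ?A 0 j = hcomp u (Suc j) * (-1)^j * schur u (replicate (n - 1 - j) 1)"
      unfolding cofactor_def dM m_def by simp
  qed
  finally show ?thesis by (simp add: schur_det)
qed



lemma E_rec:
  fixes u :: "nat \<Rightarrow> 'a::field_char_0"
  shows "of_nat n * schur u (replicate n 1) =
    (\<Sum>k=1..n. (-1)^(k+1) * of_nat k * u k * schur u (replicate (n-k) 1))"
proof -
  define E where "E = (\<lambda>k. schur u (replicate k 1))"
  define h where "h = hcomp u"
  define Hs where "Hs = Abs_fps (\<lambda>k. (-1)^k * h k)"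
  define Ef where "Ef = Abs_fps E"
  define P where "P = Abs_fps (\<lambda>i. (-1)^(i+1) * of_nat (i+1) * u (i+1))"
  have E0: "E 0 = 1" unfolding E_def by (simp add: schur_nil)
  have h0: "h 0 = 1" unfolding h_def by (simp add: hcomp_0)
  have HE: "Hs * Ef = 1"
  proof (rule fps_ext)
    fix n
    have c: "(Hs * Ef) $ n = (\<Sum>i=0..n. (-1)^i * h i * E (n-i))"
      unfolding Hs_def Ef_def fps_mult_nth by simp
    show "(Hs * Ef) $ n = (1::'a fps) $ n"
    proof (cases "n = 0")
      case True thus ?thesis unfolding c using E0 h0 by simp
    next
      case False
      have "(\<Sum>i=0..n. (-1)^i * h i * E (n-i)) = (-1)^0 * h 0 * E (n - 0) + (\<Sum>i=Suc 0..n. (-1)^i * h i * E (n-i))"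
        by (rule sum.atLeast_Suc_atMost) simp
      also have "(\<Sum>i=Suc 0..n. (-1)^i * h i * E (n-i)) = (\<Sum>j<n. (-1)^(Suc j) * h (Suc j) * E (n - Suc j))"
        using sum_bounds_lt_plus1[of "\<lambda>i. (-1)^i * h i * E (n-i)" n, symmetric] by simp
      also have "\<dots> = - (\<Sum>j<n. h (Suc j) * (-1)^j * E (n - 1 - j))"
        by (simp add: sum_negf[symmetric] algebra_simps)
      also have "(\<Sum>j<n. h (Suc j) * (-1)^j * E (n - 1 - j)) = E n"
        unfolding E_def h_def using E_expand[of n u] False by simp
      finally show ?thesis unfolding c using h0 False by simp
    qed
  qed
  have HD: "fps_deriv Hs = P * Hs"
  proof (rule fps_ext)
    fix n
    have "(P * Hs) $ n = (\<Sum>i=0..n. (-1)^(i+1) * of_nat (i+1) * u (i+1) * ((-1)^(n-i) * h (n-i)))"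
      unfolding P_def Hs_def fps_mult_nth by simp
    also have "\<dots> = (\<Sum>i=0..n. (-1)^(n+1) * (of_nat (Suc i) * u (Suc i) * h (n-i)))"
    proof (rule sum.cong[OF refl])
      fix i assume "i \<in> {0..n}"
      hence "(-1::'a)^(i+1) * (-1)^(n-i) = (-1)^(n+1)"
        by (simp flip: power_add)
      thus "(-1)^(i+1) * of_nat (i+1) * u (i+1) * ((-1)^(n-i) * h (n-i)) =
            (-1)^(n+1) * (of_nat (Suc i) * u (Suc i) * h (n-i))"
        by (metis (no_types, lifting) Suc_eq_plus1 mult.commute mult.left_commute)
    qed
    also have "\<dots> = (-1)^(n+1) * (\<Sum>i=0..n. of_nat (Suc i) * u (Suc i) * h (n-i))"
      by (simp add: sum_distrib_left)
    also have "(\<Sum>i=0..n. of_nat (Suc i) * u (Suc i) * h (n-i)) = (\<Sum>k=Suc 0..Suc n. of_nat k * u k * h (Suc n - k))"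
      by (subst sum.shift_bounds_cl_Suc_ivl) simp
    also have "\<dots> = of_nat (Suc n) * h (Suc n)"
      unfolding h_def using hcomp_rec[of "Suc n" u] by simp
    finally have "(P * Hs) $ n = (-1)^(n+1) * (of_nat (Suc n) * h (Suc n))" .
    thus "fps_deriv Hs $ n = (P * Hs) $ n"
      unfolding Hs_def by (simp add: algebra_simps)
  qed
  have Hs0: "Hs \<noteq> 0" using HE by auto
  have "Hs * (fps_deriv Ef + P * Ef) = fps_deriv (Hs * Ef)"
    by (simp add: fps_deriv_mult HD algebra_simps)
  also have "\<dots> = 0" using HE by simp
  finally have "fps_deriv Ef + P * Ef = 0" using Hs0 by simp
  hence ED: "fps_deriv Ef = - (P * Ef)" by (simp add: eq_neg_iff_add_eq_0)
  show ?thesis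
  proof (cases n)
    case 0 thus ?thesis by simp
  next
    case (Suc m)
    have "of_nat (Suc m) * E (Suc m) = fps_deriv Ef $ m"
      unfolding Ef_def by simp
    also have "\<dots> = - (\<Sum>i=0..m. (-1)^(i+1) * of_nat (i+1) * u (i+1) * E (m-i))"
      unfolding ED by (simp add: P_def Ef_def fps_mult_nth)
    also have "\<dots> = (\<Sum>i=0..m. (-1)^(Suc i + 1) * of_nat (Suc i) * u (Suc i) * E (Suc m - Suc i))"
      by (simp add: sum_negf[symmetric])
    also have "\<dots> = (\<Sum>k=Suc 0..Suc m. (-1)^(k+1) * of_nat k * u k * E (Suc m - k))"
      by (subst sum.shift_bounds_cl_Suc_ivl) simp
    finally show ?thesis unfolding Suc E_def by simp
  qed
qed



lemma Rop_pow_nth: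
  "((Rop G \<beta> \<gamma> \<sigma>) ^^ k) f $ n =
     (if k \<le> n then \<gamma>^k * (\<Prod>i=1..k. poly G (\<sigma> * \<beta> * of_nat (n-i))) * f $ (n-k) else 0)"
proof (induction k arbitrary: n)
  case 0 thus ?case by simp
next
  case (Suc k)
  show ?case
  proof (cases n)
    case 0 thus ?thesis by (simp add: Rop_def)
  next
    case (Suc n')
    have p: "(\<Prod>i=1..Suc k. poly G (\<sigma> * \<beta> * of_nat (Suc n' - i))) =
          poly G (\<sigma> * \<beta> * of_nat n') * (\<Prod>i=1..k. poly G (\<sigma> * \<beta> * of_nat (n' - i)))"
    proof -
      have "(\<Prod>i=1..Suc k. poly G (\<sigma> * \<beta> * of_nat (Suc n' - i))) =
         poly G (\<sigma> * \<beta> * of_nat (Suc n' - 1)) * (\<Prod>i=Suc 1..Suc k. poly G (\<sigma> * \<beta> * of_nat (Suc n' - i)))"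
        by (rule prod.atLeast_Suc_atMost) simp
      also have "(\<Prod>i=Suc 1..Suc k. poly G (\<sigma> * \<beta> * of_nat (Suc n' - i))) =
                 (\<Prod>i=1..k. poly G (\<sigma> * \<beta> * of_nat (n' - i)))"
        by (subst prod.shift_bounds_cl_Suc_ivl) simp
      finally show ?thesis by simp
    qed
    show ?thesis
      using Suc.IH[of n'] unfolding Suc p by (simp add: Rop_def)
  qed
qed

definition rprod :: "'a::field poly \<Rightarrow> 'a \<Rightarrow> 'a \<Rightarrow> nat \<Rightarrow> 'a" where
  "rprod G \<beta> \<sigma> n = (\<Prod>m<n. poly G (\<sigma> * \<beta> * of_nat m))"

lemma rprod_split:
  "k \<le> n \<Longrightarrow> rprod G \<beta> \<sigma> n = rprod G \<beta> \<sigma> (n-k) * (\<Prod>i=1..k. poly G (\<sigma> * \<beta> * of_nat (n-i)))"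
proof (induction k)
  case 0 thus ?case by simp
next
  case (Suc k)
  have e: "n - k = Suc (n - Suc k)" using Suc.prems by simp
  have "rprod G \<beta> \<sigma> (n - k) = rprod G \<beta> \<sigma> (n - Suc k) * poly G (\<sigma> * \<beta> * of_nat (n - Suc k))"
    unfolding rprod_def e by simp
  thus ?case using Suc by (simp add: prod.cl_ivl_Suc algebra_simps)
qed

lemma r_single: "r_lambda G \<beta> [n] = rprod G \<beta> 1 n"
proof -
  have "r_lambda G \<beta> [n] = (\<Prod>j=1..n. poly G (of_int (int j - 1) * \<beta>))"
    unfolding r_lambda_def by simp
  also have "\<dots> = rprod G \<beta> 1 n"
    unfolding rprod_def
    by (induction n) (simp_all add: prod.cl_ivl_Suc algebra_simps)
  finally show ?thesis .
qed

lemma r_col: "r_lambda G \<beta> (replicate n 1) = rprod G \<beta> (-1) n"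
proof -
  have "r_lambda G \<beta> (replicate n 1) = (\<Prod>i=1..n. poly G (of_int (1 - int i) * \<beta>))"
    unfolding r_lambda_def by (rule prod.cong) auto
  also have "\<dots> = rprod G \<beta> (-1) n"
    unfolding rprod_def
    by (induction n) (simp_all add: prod.cl_ivl_Suc algebra_simps)
  finally show ?thesis .
qed

lemma length_le_sum_list: "(\<forall>x\<in>set xs. (1::nat) \<le> x) \<Longrightarrow> length xs \<le> sum_list xs"
  by (induction xs) auto

lemma finite_partitions: "finite (partitions_of n)"
proof (rule finite_subset)
  show "partitions_of n \<subseteq> {xs. set xs \<subseteq> {0..n} \<and> length xs \<le> n}"
  proof safe
    fix xs assume xs: "xs \<in> partitions_of n"
    hence z: "0 \<notin> set xs" and s: "sum_list xs = n" unfolding partitions_of_def by auto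
    have "\<forall>x\<in>set xs. (1::nat) \<le> x" using z by (metis less_one not_less)
    thus "length xs \<le> n" using length_le_sum_list s by metis
    fix x assume "x \<in> set xs"
    thus "x \<in> {0..n}" using member_le_sum_list[of x xs] s by simp
  qed
  show "finite {xs. set xs \<subseteq> {0..n::nat} \<and> length xs \<le> n}"
    by (rule finite_lists_length_le) simp
qed

lemma partitions_0: "partitions_of 0 = {[]}"
  unfolding partitions_of_def by (auto simp: sum_list_eq_0_iff) (metis ex_in_conv set_empty)

lemma single_in: "n > 0 \<Longrightarrow> [n] \<in> partitions_of n"
  unfolding partitions_of_def by simp

lemma col_in: "replicate n 1 \<in> partitions_of n"
  unfolding partitions_of_def by (induction n) auto

lemma not_single:
  assumes "lam \<in> partitions_of n" "n > 0" "lam \<noteq> [n]"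
  shows "length lam \<ge> 2 \<and> lam!1 \<ge> 1 \<and> lam!1 \<le> lam!0"
proof -
  have sw: "sorted_wrt (\<ge>) lam" and z: "0 \<notin> set lam" and s: "sum_list lam = n"
    using assms(1) unfolding partitions_of_def by auto
  have len: "length lam \<ge> 2"
  proof (rule ccontr)
    assume "\<not> length lam \<ge> 2"
    hence "length lam = 0 \<or> length lam = 1" by linarith
    thus False
    proof
      assume "length lam = 0" thus False using s assms(2) by simp
    next
      assume "length lam = 1"
      then obtain x where "lam = [x]" by (metis One_nat_def length_0_conv length_Suc_conv)
      thus False using s assms(3) by simp
    qed
  qed
  have "lam!1 \<in> set lam" using len by simp
  hence "lam!1 \<ge> 1" using z by (metis less_one not_less)
  moreover have "lam!1 \<le> lam!0" using sorted_wrt_nth_less[OF sw, of 0 1] len by simp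
  ultimately show ?thesis using len by simp
qed

lemma not_col:
  assumes "lam \<in> partitions_of n" "lam \<noteq> replicate n 1"
  shows "lam \<noteq> [] \<and> lam!0 \<ge> 2"
proof -
  have sw: "sorted_wrt (\<ge>) lam" and z: "0 \<notin> set lam" and s: "sum_list lam = n"
    using assms(1) unfolding partitions_of_def by auto
  have "\<exists>x\<in>set lam. x \<ge> 2"
  proof (rule ccontr)
    assume "\<not> (\<exists>x\<in>set lam. x \<ge> 2)"
    hence a: "\<forall>x\<in>set lam. x = 1"
    proof (intro ballI)
      fix x assume nx: "\<not> (\<exists>x\<in>set lam. x \<ge> 2)" and x: "x \<in> set lam"
      have "x \<noteq> 0" using z x by metis
      moreover have "\<not> x \<ge> 2" using nx x by blast
      ultimately show "x = 1" by linarith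
    qed
    hence r: "replicate (length lam) 1 = lam" by (rule replicate_length_same)
    have "sum_list (replicate (length lam) (1::nat)) = length lam" by (simp add: sum_list_replicate)
    hence "length lam = n" using s r by simp
    thus False using r assms(2) by simp
  qed
  then obtain i where i: "i < length lam" "lam!i \<ge> 2" by (metis in_set_conv_nth)
  have "lam!i \<le> lam!0"
  proof (cases "i = 0")
    case False thus ?thesis using sorted_wrt_nth_less[OF sw, of 0 i] i by simp
  qed simp
  thus ?thesis using i by auto
qed

lemma sumL:
  fixes f :: "nat \<Rightarrow> 'a::comm_monoid_add"
  assumes "\<forall>k>L. f k = 0"
  shows "(\<Sum>k=1..L. if k \<le> n then f k else 0) = (\<Sum>k=1..n. f k)"
proof -
  let ?g = "\<lambda>k. if k \<le> n then f k else 0"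
  have "(\<Sum>k=1..L. ?g k) = (\<Sum>k=1..L+n. ?g k)"
    by (rule sum.mono_neutral_left) (use assms in auto)
  also have "\<dots> = (\<Sum>k=1..n. ?g k)"
    by (rule sum.mono_neutral_right) auto
  also have "\<dots> = (\<Sum>k=1..n. f k)" by (rule sum.cong) auto
  finally show ?thesis .
qed

lemma Dop_nth: "(fps_const \<beta> * Dop (Abs_fps a)) $ n = \<beta> * of_nat n * a n"
  unfolding Dop_def by (cases n) (simp_all add: algebra_simps)

lemma Sop_nth:
  "S_op L s (Rop G \<beta> \<gamma> \<sigma>) (Abs_fps a) $ n =
   (\<Sum>k=1..L. if k \<le> n then of_nat k * s k * (\<gamma>^k * (\<Prod>i=1..k. poly G (\<sigma> * \<beta> * of_nat (n-i))) * a (n-k)) else 0)"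
  unfolding S_op_def fps_sum_nth by (rule sum.cong) (simp_all add: Rop_pow_nth)

lemma neg_X_pow: "(- fps_X :: 'a::field fps) ^ n = fps_const ((-1)^n) * fps_X ^ n"
proof -
  have e: "(- fps_X :: 'a fps) = fps_const (-1) * fps_X" by simp
  have "(fps_const (-1) * fps_X :: 'a fps) ^ n = fps_const (-1) ^ n * fps_X ^ n"
    by (rule power_mult_distrib)
  also have "fps_const (-1) ^ n = (fps_const ((-1)^n) :: 'a fps)"
    by (rule fps_const_power)
  finally show ?thesis unfolding e .
qed



lemma sign_lemma: "k \<le> n \<Longrightarrow> (-1::'a::comm_ring_1)^n * (-1)^(k+1) = - ((-1)^(n-k))"
proof -
  assume k: "k \<le> n"
  have "(-1::'a)^n = (-1)^(n-k) * (-1)^k" using k by (simp flip: power_add)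
  moreover have "(-1::'a)^k * (-1)^(k+1) = -1"
    by (simp flip: power_add add: power_mult_distrib)
  ultimately show ?thesis by (metis mult.assoc mult_minus1_right)
qed

theorem theorem6p1:
  fixes G :: "'a::field_char_0 poly" and \<beta> \<gamma> :: 'a and s :: "nat \<Rightarrow> 'a" and L :: nat
  assumes "coeff G 0 = 1"
    and "\<beta> \<noteq> 0"
    and "\<forall>k. k > L \<longrightarrow> s k = 0"
  shows "fps_const \<beta> * Dop (tau G \<beta> \<gamma> s miwa)
           - S_op L s (Rop G \<beta> \<gamma> 1) (tau G \<beta> \<gamma> s miwa) = 0
       \<and> fps_const \<beta> * Dop (tau G \<beta> \<gamma> s (\<lambda>k. - miwa k))
           + S_op L s (Rop G \<beta> \<gamma> (-1)) (tau G \<beta> \<gamma> s (\<lambda>k. - miwa k)) = 0"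
proof -
  note b = assms(2)
  note sL = assms(3)
  define u where "u = (\<lambda>k. s k / \<beta>)"
  have su: "s k = \<beta> * u k" for k unfolding u_def using b by simp
  define h where "h = hcomp u"
  define E where "E = (\<lambda>k. schur u (replicate k 1))"
  define ap where "ap = (\<lambda>n. \<gamma>^n * rprod G \<beta> 1 n * h n)"
  define am where "am = (\<lambda>n. \<gamma>^n * rprod G \<beta> (-1) n * E n * (-1)^n)"
  have r_nil: "r_lambda G \<beta> [] = 1" unfolding r_lambda_def by simp
  have inner_plus: "(\<Sum>lam\<in>partitions_of n.
        fps_const (\<gamma> ^ n * r_lambda G \<beta> lam * schur (\<lambda>k. s k / \<beta>) lam) * schur miwa lam)
      = fps_const (ap n) * fps_X ^ n" for n
  proof (cases "n = 0")
    case True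
    thus ?thesis unfolding ap_def h_def
      by (simp add: partitions_0 r_nil schur_nil hcomp_0 rprod_def)
  next
    case False
    have "(\<Sum>lam\<in>partitions_of n.
        fps_const (\<gamma> ^ n * r_lambda G \<beta> lam * schur (\<lambda>k. s k / \<beta>) lam) * schur miwa lam)
      = (\<Sum>lam\<in>{[n]}.
        fps_const (\<gamma> ^ n * r_lambda G \<beta> lam * schur (\<lambda>k. s k / \<beta>) lam) * schur miwa lam)"
    proof (rule sum.mono_neutral_right)
      show "finite (partitions_of n)" by (rule finite_partitions)
      show "{[n]} \<subseteq> partitions_of n" using single_in False by simp
      show "\<forall>lam\<in>partitions_of n - {[n]}.
        fps_const (\<gamma> ^ n * r_lambda G \<beta> lam * schur (\<lambda>k. s k / \<beta>) lam) * schur (miwa :: nat \<Rightarrow> 'a fps) lam = 0"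
      proof
        fix lam assume "lam \<in> partitions_of n - {[n]}"
        hence "length lam \<ge> 2 \<and> lam!1 \<ge> 1 \<and> lam!1 \<le> lam!0" using not_single False by blast
        hence "schur (miwa :: nat \<Rightarrow> 'a fps) lam = 0" using schur_miwa_zero by blast
        thus "fps_const (\<gamma> ^ n * r_lambda G \<beta> lam * schur (\<lambda>k. s k / \<beta>) lam) * schur (miwa :: nat \<Rightarrow> 'a fps) lam = 0"
          by simp
      qed
    qed
    also have "\<dots> = fps_const (ap n) * fps_X ^ n"
      unfolding ap_def h_def u_def by (simp add: r_single schur_single hcomp_miwa)
    finally show ?thesis .
  qed
  have inner_minus: "(\<Sum>lam\<in>partitions_of n.
        fps_const (\<gamma> ^ n * r_lambda G \<beta> lam * schur (\<lambda>k. s k / \<beta>) lam) * schur (\<lambda>k. - miwa k) lam)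
      = fps_const (am n) * fps_X ^ n" for n
  proof -
    have "(\<Sum>lam\<in>partitions_of n.
        fps_const (\<gamma> ^ n * r_lambda G \<beta> lam * schur (\<lambda>k. s k / \<beta>) lam) * schur (\<lambda>k. - miwa k) lam)
      = (\<Sum>lam\<in>{replicate n 1}.
        fps_const (\<gamma> ^ n * r_lambda G \<beta> lam * schur (\<lambda>k. s k / \<beta>) lam) * schur (\<lambda>k. - miwa k) lam)"
    proof (rule sum.mono_neutral_right)
      show "finite (partitions_of n)" by (rule finite_partitions)
      show "{replicate n 1} \<subseteq> partitions_of n" using col_in by simp
      show "\<forall>lam\<in>partitions_of n - {replicate n 1}.
        fps_const (\<gamma> ^ n * r_lambda G \<beta> lam * schur (\<lambda>k. s k / \<beta>) lam) * schur (\<lambda>k. - (miwa k :: 'a fps)) lam = 0"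
      proof
        fix lam assume "lam \<in> partitions_of n - {replicate n 1}"
        hence "lam \<noteq> [] \<and> lam!0 \<ge> 2" using not_col by blast
        hence "schur (\<lambda>k. - (miwa k :: 'a fps)) lam = 0" using schur_negmiwa_big by blast
        thus "fps_const (\<gamma> ^ n * r_lambda G \<beta> lam * schur (\<lambda>k. s k / \<beta>) lam) * schur (\<lambda>k. - (miwa k :: 'a fps)) lam = 0"
          by simp
      qed
    qed
    also have "\<dots> = fps_const (\<gamma> ^ n * rprod G \<beta> (-1) n * E n) * (- fps_X) ^ n"
      unfolding E_def u_def by (simp add: r_col[simplified] schur_negmiwa_col[simplified])
    also have "\<dots> = fps_const (am n) * fps_X ^ n"
      unfolding neg_X_pow am_def by (simp only: mult.assoc[symmetric] fps_const_mult)
    finally show ?thesis .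
  qed
  have tau_plus: "tau G \<beta> \<gamma> s miwa = Abs_fps ap"
    unfolding tau_def inner_plus by (rule suminf_fps_X_pow)
  have tau_minus: "tau G \<beta> \<gamma> s (\<lambda>k. - miwa k) = Abs_fps am"
    unfolding tau_def inner_minus by (rule suminf_fps_X_pow)
  have hrec: "of_nat n * h n = (\<Sum>k=1..n. of_nat k * u k * h (n-k))" for n
    unfolding h_def by (rule hcomp_rec[OF inv_fact_field])
  have Erec: "of_nat n * E n = (\<Sum>k=1..n. (-1)^(k+1) * of_nat k * u k * E (n-k))" for n
    unfolding E_def by (rule E_rec)
  have P1: "fps_const \<beta> * Dop (Abs_fps ap) - S_op L s (Rop G \<beta> \<gamma> 1) (Abs_fps ap) = 0"
  proof (rule fps_ext)
    fix n
    have "(\<Sum>k=1..L. if k \<le> n then of_nat k * s k * (\<gamma>^k * (\<Prod>i=1..k. poly G (1 * \<beta> * of_nat (n-i))) * ap (n-k)) else 0)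
        = (\<Sum>k=1..L. if k \<le> n then of_nat k * s k * (\<gamma>^n * rprod G \<beta> 1 n * h (n-k)) else 0)"
    proof (rule sum.cong[OF refl])
      fix k assume "k \<in> {1..L}"
      show "(if k \<le> n then of_nat k * s k * (\<gamma>^k * (\<Prod>i=1..k. poly G (1 * \<beta> * of_nat (n-i))) * ap (n-k)) else 0)
          = (if k \<le> n then of_nat k * s k * (\<gamma>^n * rprod G \<beta> 1 n * h (n-k)) else 0)"
      proof (cases "k \<le> n")
        case True
        have g: "\<gamma>^k * \<gamma>^(n-k) = \<gamma>^n" using True by (simp flip: power_add)
        have "\<gamma>^k * (\<Prod>i=1..k. poly G (1 * \<beta> * of_nat (n-i))) * ap (n-k)
            = (\<gamma>^k * \<gamma>^(n-k)) * (rprod G \<beta> 1 (n-k) * (\<Prod>i=1..k. poly G (1 * \<beta> * of_nat (n-i)))) * h (n-k)"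
          unfolding ap_def by (simp add: algebra_simps)
        also have "\<dots> = \<gamma>^n * rprod G \<beta> 1 n * h (n-k)"
          unfolding g rprod_split[OF True, symmetric] ..
        finally show ?thesis using True by simp
      qed simp
    qed
    also have "\<dots> = (\<Sum>k=1..n. of_nat k * s k * (\<gamma>^n * rprod G \<beta> 1 n * h (n-k)))"
      by (rule sumL) (use sL in simp)
    also have "\<dots> = \<gamma>^n * rprod G \<beta> 1 n * \<beta> * (\<Sum>k=1..n. of_nat k * u k * h (n-k))"
      unfolding su by (simp add: sum_distrib_left algebra_simps)
    also have "\<dots> = \<beta> * of_nat n * ap n"
      unfolding hrec[symmetric] ap_def by (simp add: algebra_simps)
    finally have S: "S_op L s (Rop G \<beta> \<gamma> 1) (Abs_fps ap) $ n = \<beta> * of_nat n * ap n"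
      unfolding Sop_nth .
    show "(fps_const \<beta> * Dop (Abs_fps ap) - S_op L s (Rop G \<beta> \<gamma> 1) (Abs_fps ap)) $ n = 0 $ n"
      using S Dop_nth[of \<beta> ap n] by simp
  qed
  have P2: "fps_const \<beta> * Dop (Abs_fps am) + S_op L s (Rop G \<beta> \<gamma> (-1)) (Abs_fps am) = 0"
  proof (rule fps_ext)
    fix n
    have "(\<Sum>k=1..L. if k \<le> n then of_nat k * s k * (\<gamma>^k * (\<Prod>i=1..k. poly G ((-1) * \<beta> * of_nat (n-i))) * am (n-k)) else 0)
        = (\<Sum>k=1..L. if k \<le> n then of_nat k * s k * (\<gamma>^n * rprod G \<beta> (-1) n * E (n-k) * (-1)^(n-k)) else 0)"
    proof (rule sum.cong[OF refl])
      fix k assume "k \<in> {1..L}"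
      show "(if k \<le> n then of_nat k * s k * (\<gamma>^k * (\<Prod>i=1..k. poly G ((-1) * \<beta> * of_nat (n-i))) * am (n-k)) else 0)
          = (if k \<le> n then of_nat k * s k * (\<gamma>^n * rprod G \<beta> (-1) n * E (n-k) * (-1)^(n-k)) else 0)"
      proof (cases "k \<le> n")
        case True
        have g: "\<gamma>^k * \<gamma>^(n-k) = \<gamma>^n" using True by (simp flip: power_add)
        have "\<gamma>^k * (\<Prod>i=1..k. poly G ((-1) * \<beta> * of_nat (n-i))) * am (n-k)
            = (\<gamma>^k * \<gamma>^(n-k)) * (rprod G \<beta> (-1) (n-k) * (\<Prod>i=1..k. poly G ((-1) * \<beta> * of_nat (n-i)))) * E (n-k) * (-1)^(n-k)"
          unfolding am_def by (simp add: algebra_simps)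
        also have "\<dots> = \<gamma>^n * rprod G \<beta> (-1) n * E (n-k) * (-1)^(n-k)"
          unfolding g rprod_split[OF True, symmetric] ..
        finally show ?thesis using True by simp
      qed simp
    qed
    also have "\<dots> = (\<Sum>k=1..n. of_nat k * s k * (\<gamma>^n * rprod G \<beta> (-1) n * E (n-k) * (-1)^(n-k)))"
      by (rule sumL) (use sL in simp)
    also have "\<dots> = - (\<gamma>^n * rprod G \<beta> (-1) n * \<beta> * (\<Sum>k=1..n. (-1)^n * ((-1)^(k+1) * of_nat k * u k * E (n-k))))"
    proof -
      have "(\<Sum>k=1..n. of_nat k * s k * (\<gamma>^n * rprod G \<beta> (-1) n * E (n-k) * (-1)^(n-k)))
          = (\<Sum>k=1..n. - (\<gamma>^n * rprod G \<beta> (-1) n * \<beta> * ((-1)^n * ((-1)^(k+1) * of_nat k * u k * E (n-k)))))"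
      proof (rule sum.cong[OF refl])
        fix k assume "k \<in> {1..n}"
        hence sg: "(-1::'a)^n * (-1)^(k+1) = - ((-1)^(n-k))" by (intro sign_lemma) simp
        have "(-1::'a)^n * ((-1)^(k+1) * of_nat k * u k * E (n-k)) = ((-1)^n * (-1)^(k+1)) * (of_nat k * u k * E (n-k))"
          by (simp only: mult_ac)
        also have "\<dots> = - ((-1)^(n-k) * (of_nat k * u k * E (n-k)))" unfolding sg by simp
        finally have e: "(-1::'a)^n * ((-1)^(k+1) * of_nat k * u k * E (n-k)) = - ((-1)^(n-k) * (of_nat k * u k * E (n-k)))" .
        show "of_nat k * s k * (\<gamma>^n * rprod G \<beta> (-1) n * E (n-k) * (-1)^(n-k))
          = - (\<gamma>^n * rprod G \<beta> (-1) n * \<beta> * ((-1)^n * ((-1)^(k+1) * of_nat k * u k * E (n-k))))"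
          unfolding e su by (simp add: algebra_simps)
      qed
      thus ?thesis by (simp add: sum_negf sum_distrib_left)
    qed
    also have "\<dots> = - (\<beta> * of_nat n * am n)"
    proof -
      have "(\<Sum>k=1..n. (-1)^n * ((-1)^(k+1) * of_nat k * u k * E (n-k))) = (-1)^n * (of_nat n * E n)"
        unfolding Erec by (simp add: sum_distrib_left)
      thus ?thesis unfolding am_def by (simp add: algebra_simps)
    qed
    finally have S: "S_op L s (Rop G \<beta> \<gamma> (-1)) (Abs_fps am) $ n = - (\<beta> * of_nat n * am n)"
      unfolding Sop_nth .
    show "(fps_const \<beta> * Dop (Abs_fps am) + S_op L s (Rop G \<beta> \<gamma> (-1)) (Abs_fps am)) $ n = 0 $ n"
      using S Dop_nth[of \<beta> am n] by simp
  qed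
  show ?thesis unfolding tau_plus tau_minus using P1 P2 by simp
qed

end
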